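(* Let $a\in\mathrm{Ext}_{\mathcal A(1)}(\mathbb M_2,\mathbb M_2)$ be the class detected in the $\rho$-Bockstein spectral sequence by $\tau^2v_0$. Then $a\,\eta=\rho\,\eta_0^2$ in $\mathrm{Ext}_{\mathcal A(1)}(\mathbb M_2,\mathbb M_2)$.
   Context: $\mathbb M_2=\mathbb F_2[\tau,\rho]$; $\mathcal A(1)=\big(\mathbb M_2,\mathbb M_2[\xi_1,\tau_0,\tau_1]/(\xi_1^2,\ \tau_0^2-\rho\tau_1-\rho\tau_0\xi_1-\tau\xi_1,\ \tau_1^2)\big)$ with $\eta_R(\tau)=\tau+\rho\tau_0$, $\eta_R(\rho)=\rho$. The $\rho$-Bockstein spectral sequence has $E_1=\mathbb F_2[\rho,\tau,v_0,\eta,x,v_1^4]/(v_0\eta,\tau\eta^3,\eta x,x^2-v_0^2v_1^4)$, $v_0=[\tau_0]$, $\eta=[\xi_1]$, $d_1(\tau)=\rho v_0$, $d_2(\tau^2)=\rho^2\eta_0$, where $\eta_0=[\tau_0^2]$ is the permanent cycle detected by $\tau\eta$. The element $\tau^2v_0$ is a permanent cycle (cobar representative $\tau^2\tau_0+\tau\rho\tau_0^2+\rho^2\tau_0^3$). *)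

theory Defs
  imports "HOL-Library.Poly_Mapping" "HOL-Library.Z2"
begin

text \<open>Concrete model of the cobar complex of the Hopf algebroid A(1) over M2 = F2[tau,rho].
  Polynomials over F2 in variables numbered by nat:
    0 = tau, 1 = rho, 2 = xi1, 3 = tau0, 4 = tau1   (first tensor factor / Gamma)
    5 = xi1', 6 = tau0', 7 = tau1'                   (second tensor factor).\<close>

type_synonym F2poly = "(nat \<Rightarrow>\<^sub>0 nat) \<Rightarrow>\<^sub>0 bit"

definition X :: "nat \<Rightarrow> F2poly" where
  "X i = Poly_Mapping.single (Poly_Mapping.single i 1) 1"

definition subst :: "(nat \<Rightarrow> F2poly) \<Rightarrow> F2poly \<Rightarrow> F2poly" where
  "subst \<sigma> p = (\<Sum>m\<in>Poly_Mapping.keys p. Poly_Mapping.single 0 (Poly_Mapping.lookup p m) *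
                    (\<Prod>v\<in>Poly_Mapping.keys m. \<sigma> v ^ Poly_Mapping.lookup m v))"

definition in_vars :: "nat \<Rightarrow> F2poly \<Rightarrow> bool" where
  "in_vars n p \<longleftrightarrow> (\<forall>m\<in>Poly_Mapping.keys p. Poly_Mapping.keys m \<subseteq> {..<n})"

definition cong_mod :: "nat \<Rightarrow> F2poly list \<Rightarrow> F2poly \<Rightarrow> F2poly \<Rightarrow> bool" where
  "cong_mod n gs p q \<longleftrightarrow> (\<exists>cs. length cs = length gs \<and> (\<forall>c\<in>set cs. in_vars n c) \<and>
      p - q = sum_list (map2 (*) cs gs))"

abbreviation "tau \<equiv> X 0"
abbreviation "rho \<equiv> X 1"
abbreviation "xi1 \<equiv> X 2"
abbreviation "tau0 \<equiv> X 3"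
abbreviation "tau1 \<equiv> X 4"

text \<open>Defining relations of Gamma = M2[xi1,tau0,tau1]/(...).\<close>
definition rels1 :: "F2poly list" where
  "rels1 = [xi1 ^ 2, tau0 ^ 2 - rho * tau1 - rho * tau0 * xi1 - tau * xi1, tau1 ^ 2]"

text \<open>x \<mapsto> 1 \<otimes> x : the second tensor factor; its M2-coefficients are identified with
  the right unit of the first factor, eta_R(tau) = tau + rho tau0, eta_R(rho) = rho.\<close>
definition into2 :: "F2poly \<Rightarrow> F2poly" where
  "into2 = subst (\<lambda>i. if i = 0 then tau + rho * tau0 else if i = 1 then rho
                     else if i = 2 then X 5 else if i = 3 then X 6 else if i = 4 then X 7 else X i)"

text \<open>Relations presenting Gamma \<otimes>_M2 Gamma as a quotient of F2[vars 0..7].\<close>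
definition rels2 :: "F2poly list" where
  "rels2 = rels1 @ map into2 rels1"

text \<open>Coproduct: psi(xi1) = xi1\<otimes>1 + 1\<otimes>xi1, psi(tau0) = tau0\<otimes>1 + 1\<otimes>tau0,
  psi(tau1) = tau1\<otimes>1 + xi1\<otimes>tau0 + 1\<otimes>tau1, psi = id on M2 (left unit).\<close>
definition psi :: "F2poly \<Rightarrow> F2poly" where
  "psi = subst (\<lambda>i. if i = 2 then xi1 + X 5 else if i = 3 then tau0 + X 6
                    else if i = 4 then tau1 + xi1 * X 6 + X 7 else X i)"

text \<open>Cobar differential C^1 = Gamma \<rightarrow> C^2 = Gamma \<otimes> Gamma (characteristic 2, no signs).\<close>
definition cobar_d1 :: "F2poly \<Rightarrow> F2poly" where
  "cobar_d1 z = into2 z - psi z + z"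

text \<open>Product of 1-cochains [x]\<cdot>[y] = [x | y] in the cobar complex.\<close>
definition cobar_prod :: "F2poly \<Rightarrow> F2poly \<Rightarrow> F2poly" where
  "cobar_prod x y = x * into2 y"

text \<open>Two 2-cocycles represent the same element of Ext^2_{A(1)}(M2,M2)
  iff their difference is a coboundary.\<close>
definition ext2_eq :: "F2poly \<Rightarrow> F2poly \<Rightarrow> bool" where
  "ext2_eq u v \<longleftrightarrow> (\<exists>z. in_vars 5 z \<and> cong_mod 8 rels2 (u - v) (cobar_d1 z))"

text \<open>Cobar representatives: a (detected by tau^2 v0), eta = [xi1], eta0 = [tau0^2].\<close>
definition a_rep :: F2poly where
  "a_rep = tau ^ 2 * tau0 + tau * rho * tau0 ^ 2 + rho ^ 2 * tau0 ^ 3"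
definition eta_rep :: F2poly where "eta_rep = xi1"
definition eta0_rep :: F2poly where "eta0_rep = tau0 ^ 2"

end

theory Submission
  imports Defs
begin

definition mon :: "(nat \<Rightarrow> F2poly) \<Rightarrow> (nat \<Rightarrow>\<^sub>0 nat) \<Rightarrow> F2poly" where
  "mon \<sigma> m = (\<Prod>v\<in>Poly_Mapping.keys m. \<sigma> v ^ Poly_Mapping.lookup m v)"

lemma mon_superset:
  assumes "finite S" "Poly_Mapping.keys m \<subseteq> S"
  shows "mon \<sigma> m = (\<Prod>v\<in>S. \<sigma> v ^ Poly_Mapping.lookup m v)"
  unfolding mon_def
  by (rule prod.mono_neutral_left) (use assms in \<open>auto simp: in_keys_iff\<close>)

lemma mon_add: "mon \<sigma> (a + b) = mon \<sigma> a * mon \<sigma> b"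
proof -
  let ?S = "Poly_Mapping.keys a \<union> Poly_Mapping.keys b"
  have f: "finite ?S" by simp
  have "mon \<sigma> (a + b) = (\<Prod>v\<in>?S. \<sigma> v ^ Poly_Mapping.lookup (a+b) v)"
    by (rule mon_superset[OF f]) (rule keys_add)
  also have "\<dots> = (\<Prod>v\<in>?S. \<sigma> v ^ Poly_Mapping.lookup a v * \<sigma> v ^ Poly_Mapping.lookup b v)"
    by (simp add: lookup_add power_add)
  also have "\<dots> = mon \<sigma> a * mon \<sigma> b"
    by (simp add: prod.distrib mon_superset[OF f])
  finally show ?thesis .
qed

lemma mon_zero: "mon \<sigma> 0 = 1" by (simp add: mon_def)

lemma subst_mon: "subst \<sigma> p = (\<Sum>m\<in>Poly_Mapping.keys p. Poly_Mapping.single 0 (Poly_Mapping.lookup p m) * mon \<sigma> m)"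
  by (simp add: subst_def mon_def)

lemma subst_superset:
  assumes "finite S" "Poly_Mapping.keys p \<subseteq> S"
  shows "subst \<sigma> p = (\<Sum>m\<in>S. Poly_Mapping.single 0 (Poly_Mapping.lookup p m) * mon \<sigma> m)"
  unfolding subst_mon
  by (rule sum.mono_neutral_left) (use assms in \<open>auto simp: in_keys_iff\<close>)

lemma subst_add: "subst \<sigma> (p + q) = subst \<sigma> p + subst \<sigma> q"
proof -
  let ?S = "Poly_Mapping.keys p \<union> Poly_Mapping.keys q"
  have f: "finite ?S" by simp
  have "subst \<sigma> (p + q) = (\<Sum>m\<in>?S. Poly_Mapping.single 0 (Poly_Mapping.lookup (p+q) m) * mon \<sigma> m)"
    by (rule subst_superset[OF f]) (rule keys_add)
  also have "\<dots> = subst \<sigma> p + subst \<sigma> q"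
    by (simp only: lookup_add single_add distrib_right sum.distrib subst_superset[OF f, symmetric] Un_upper1 Un_upper2)
  finally show ?thesis .
qed

lemma subst_zero: "subst \<sigma> 0 = 0" by (simp add: subst_def)

lemma subst_sum: "subst \<sigma> (sum f A) = (\<Sum>a\<in>A. subst \<sigma> (f a))"
  by (induction A rule: infinite_finite_induct) (auto simp: subst_zero subst_add)

lemma subst_single: "subst \<sigma> (Poly_Mapping.single m c) = Poly_Mapping.single 0 c * mon \<sigma> m"
  by (cases "c = 0") (simp_all add: subst_mon)

lemma expand: "p = (\<Sum>m\<in>Poly_Mapping.keys p. Poly_Mapping.single m (Poly_Mapping.lookup p m))"
proof (rule poly_mapping_eqI)
  fix k
  show "Poly_Mapping.lookup p k = Poly_Mapping.lookup (\<Sum>m\<in>Poly_Mapping.keys p. Poly_Mapping.single m (Poly_Mapping.lookup p m)) k"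
    by (auto simp: lookup_sum lookup_single when_def in_keys_iff)
qed

lemma subst_mult: "subst \<sigma> (p * q) = subst \<sigma> p * subst \<sigma> q"
proof -
  let ?P = "Poly_Mapping.keys p" and ?Q = "Poly_Mapping.keys q"
  have "p * q = (\<Sum>a\<in>?P. Poly_Mapping.single a (Poly_Mapping.lookup p a)) * (\<Sum>b\<in>?Q. Poly_Mapping.single b (Poly_Mapping.lookup q b))"
    by (rule arg_cong2[where f="(*)"]) (rule expand)+
  also have "\<dots> = (\<Sum>a\<in>?P. \<Sum>b\<in>?Q. Poly_Mapping.single (a+b) (Poly_Mapping.lookup p a * Poly_Mapping.lookup q b))"
    by (simp add: sum_product mult_single)
  finally have pq: "p * q = \<dots>" .
  have "subst \<sigma> (p * q) = (\<Sum>a\<in>?P. \<Sum>b\<in>?Q. (Poly_Mapping.single 0 (Poly_Mapping.lookup p a) * mon \<sigma> a) * (Poly_Mapping.single 0 (Poly_Mapping.lookup q b) * mon \<sigma> b))"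
    unfolding pq subst_sum subst_single
    by (intro sum.cong refl) (simp add: mon_add mult_single[of 0 _ 0, simplified, symmetric] ac_simps)
  also have "\<dots> = subst \<sigma> p * subst \<sigma> q"
    by (simp add: subst_mon sum_product)
  finally show ?thesis .
qed

lemma subst_uminus: "subst \<sigma> (- p) = - subst \<sigma> p"
  using subst_add[of \<sigma> "-p" p] by (simp add: subst_zero eq_neg_iff_add_eq_0)

lemma subst_diff: "subst \<sigma> (p - q) = subst \<sigma> p - subst \<sigma> q"
  using subst_add[of \<sigma> p "-q"] by (simp add: subst_uminus)

lemma subst_one: "subst \<sigma> 1 = 1"
  by (simp add: subst_def)

lemma subst_power: "subst \<sigma> (p ^ n) = subst \<sigma> p ^ n"
  by (induction n) (simp_all add: subst_one subst_mult)

lemma subst_X: "subst \<sigma> (X i) = \<sigma> i"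
  by (simp add: X_def subst_single mon_def)

lemmas subst_hom = subst_add subst_mult subst_diff subst_uminus subst_one subst_power subst_X subst_zero

lemma two_zero: "(2::F2poly) = 0"
proof -
  have "(2::F2poly) = Poly_Mapping.single 0 (2::bit)"
    by (rule single_numeral[symmetric])
  also have "\<dots> = 0" by (simp only: bit_2_eq_0 single_zero)
  finally show ?thesis .
qed

lemma in_vars_X: "i < n \<Longrightarrow> in_vars n (X i)"
  unfolding in_vars_def X_def by simp
lemma in_vars_add: "in_vars n p \<Longrightarrow> in_vars n q \<Longrightarrow> in_vars n (p + q)"
  unfolding in_vars_def using keys_add[of p q] by blast
lemma in_vars_mult:
  assumes p: "in_vars n p" and q: "in_vars n q" shows "in_vars n (p * q)"
  unfolding in_vars_def
proof
  fix m assume m: "m \<in> Poly_Mapping.keys (p * q)"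
  then obtain a b where ab: "m = a + b" "a \<in> Poly_Mapping.keys p" "b \<in> Poly_Mapping.keys q"
    using keys_mult[of p q] by blast
  have "Poly_Mapping.keys a \<subseteq> {..<n}" "Poly_Mapping.keys b \<subseteq> {..<n}"
    using p q ab(2,3) unfolding in_vars_def by blast+
  then show "Poly_Mapping.keys m \<subseteq> {..<n}"
    using keys_add[of a b] unfolding ab(1) by blast
qed
lemma in_vars_uminus: "in_vars n p \<Longrightarrow> in_vars n (- p)"
  unfolding in_vars_def by (simp only: keys_minus)
lemma in_vars_diff: "in_vars n p \<Longrightarrow> in_vars n q \<Longrightarrow> in_vars n (p - q)"
  unfolding diff_conv_add_uminus by (intro in_vars_add in_vars_uminus)
lemma in_vars_one: "in_vars n 1" unfolding in_vars_def by simp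
lemma in_vars_zero: "in_vars n 0" unfolding in_vars_def by simp
lemma in_vars_power: "in_vars n p \<Longrightarrow> in_vars n (p ^ k)"
  by (induction k) (simp_all only: power_0 power_Suc in_vars_one in_vars_mult)

lemmas in_vars_rules = in_vars_X in_vars_add in_vars_mult in_vars_diff in_vars_one in_vars_zero in_vars_power

lemma char2: "(A::F2poly) = B + 2 * W \<Longrightarrow> A = B" by (simp add: two_zero)

lemma into2_hom:
  "into2 (p + q) = into2 p + into2 q" "into2 (p * q) = into2 p * into2 q"
  "into2 (p - q) = into2 p - into2 q" "into2 (p ^ n) = into2 p ^ n"
  by (simp_all add: into2_def subst_hom)
lemma into2_X:
  "into2 (X 0) = X 0 + X 1 * X 3" "into2 (X 1) = X 1" "into2 (X 2) = X 5"
  "into2 (X 3) = X 6" "into2 (X 4) = X 7"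
  by (simp_all add: into2_def subst_X)
lemma psi_hom:
  "psi (p + q) = psi p + psi q" "psi (p * q) = psi p * psi q"
  "psi (p - q) = psi p - psi q" "psi (p ^ n) = psi p ^ n"
  by (simp_all add: psi_def subst_hom)
lemma psi_X:
  "psi (X 0) = X 0" "psi (X 1) = X 1" "psi (X 2) = X 2 + X 5"
  "psi (X 3) = X 3 + X 6" "psi (X 4) = X 4 + X 2 * X 6 + X 7"
  by (simp_all add: psi_def subst_X)

lemma gen:
  fixes va vb vc vd ve vf vg vh :: "'a::comm_ring_1"
  shows "(va^2 * vd + va * vb * vd^2 + vb^2 * vd ^ 3) * vf -
    vb * (vd^2 * (vg)^2) -
    ((va + vb * vd)^2 * vh + (va + vb * vd)^2 * vf * vg -
     (va^2 * (ve + vc * vg + vh) + va^2 * (vc + vf) * (vd + vg)) +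
     (va^2 * ve + va^2 * vc * vd)) = (0 * vc^2 +
    ((vb * (vg)^2 + vb^2 * vh + vb^2 * vf * vg + vb^2 * vd * vf +
      va * vb * vf) *
     (vd^2 - vb * ve - vb * vd * vc - va * vc) +
     (0 * ve^2 +
      (0 * (vf)^2 +
       ((vb^2 * ve + vb^2 * vc * vd + va * vb * vc) *
        ((vg)^2 - vb * vh - vb * vg * vf - (va + vb * vd) * vf) +
        (0 * (vh)^2 + 0)))))) + 2 * (- (vb * vd ^ 2 * vg ^ 2) - vb ^ 2 * vd ^ 2 * vh - vb ^ 2 * vd ^ 2 * vf * vg + vb ^ 3 * ve * vh + vb ^ 3 * ve * vf * vg + vb ^ 3 * vd * ve * vf + vb ^ 3 * vc * vd * vh + vb ^ 3 * vc * vd * vf * vg + vb ^ 3 * vc * vd ^ 2 * vf - va * vb * vd * vh - va * vb * vd * vf * vg + va * vb ^ 2 * ve * vf + va * vb ^ 2 * vc * vh + va * vb ^ 2 * vc * vf * vg + (2) * va * vb ^ 2 * vc * vd * vf + va ^ 2 * vd * vf + va ^ 2 * vc * vg + va ^ 2 * vb * vc * vf)"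
  by (simp add: algebra_simps power2_eq_square power3_eq_cube)

theorem mainTheorem12:
  shows "ext2_eq (cobar_prod a_rep eta_rep) (rho * cobar_prod eta0_rep eta0_rep)"
proof -
  define z where "z = tau ^ 2 * tau1 + tau ^ 2 * xi1 * tau0"
  define cs :: "F2poly list" where "cs = [0, (X 1 * X 6 ^ 2 + X 1 ^ 2 * X 7 + X 1 ^ 2 * X 5 * X 6 + X 1 ^ 2 * X 3 * X 5 + X 0 * X 1 * X 5), 0, 0, (X 1 ^ 2 * X 4 + X 1 ^ 2 * X 2 * X 3 + X 0 * X 1 * X 2), 0]"
  have iz: "in_vars 5 z" unfolding z_def by (intro in_vars_rules) simp_all
  have ics: "\<forall>c\<in>set cs. in_vars 8 c" unfolding cs_def by (auto intro!: in_vars_rules)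
  have eq: "cobar_prod a_rep eta_rep - rho * cobar_prod eta0_rep eta0_rep - cobar_d1 z = sum_list (map2 (*) cs rels2)"
    unfolding cs_def z_def rels2_def rels1_def cobar_prod_def cobar_d1_def
      a_rep_def eta_rep_def eta0_rep_def
    apply (simp only: into2_hom into2_X psi_hom psi_X list.map map_append append.simps zip_Cons_Cons zip_Nil sum_list.Cons sum_list.Nil prod.case)
    apply (rule char2)
    apply (rule gen[where va="X 0" and vb="X 1" and vc="X 2" and vd="X 3" and ve="X 4" and vf="X 5" and vg="X 6" and vh="X 7"])
    done
  show ?thesis
    unfolding ext2_eq_def cong_mod_def
    apply (rule exI[of _ z])
    apply (intro conjI iz)
    apply (rule exI[of _ cs])
    apply (intro conjI ics eq)
    apply (simp only: cs_def rels2_def rels1_def length_append length_map list.size)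
    done
qed

end
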